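(* Fix $R>0$, an integer $T>1$ and $\alpha>1$. Let $\Theta_1=(\alpha,\rho_{r_1},\rho_{d_1},\rho_{s_1},\rho_{0_1},T)$ and $\Theta_2=(\alpha,\rho_{r_2},\rho_{d_2},\rho_{s_2},\rho_{0_2},T)$ with all $\rho$'s positive. If $\rho_{r_2}\ge\rho_{r_1}$, $\rho_{d_2}\ge\rho_{d_1}$, $\rho_{s_2}\ge\rho_{s_1}$ and $\rho_{0_2}\ge\rho_{0_1}$, with at least one of these inequalities strict, then $\zeta^\star_{zf}(R,\Theta_1)>\zeta^\star_{zf}(R,\Theta_2)$.
   Context: For $\Theta=(\alpha,\rho_r,\rho_d,\rho_s,\rho_0,T)$ with $\alpha>1$, $\rho_r,\rho_d,\rho_s,\rho_0>0$, integer $T>1$, and $R>0$: for $M>K$, $1\le K\le\tau<T$ let $$\gamma_u=\frac{K+\tau}{2\tau(M-K)}\Big(2^{\frac{R}{K(1-\tau/T)}}-1\Big)+\sqrt{\Big(\frac{K+\tau}{2\tau(M-K)}\Big(2^{\frac{R}{K(1-\tau/T)}}-1\Big)\Big)^2+\frac{2^{\frac{R}{K(1-\tau/T)}}-1}{\tau(M-K)}}$$ and define $\zeta_{zf}(M,K,\tau,R,\Theta)>0$ by $$\frac{R}{\zeta_{zf}(M,K,\tau,R,\Theta)}=\alpha K\gamma_u+\rho_s+K\Big(\rho_d+\frac{8K^2\rho_0}{3T}\Big)+M\Big(\rho_r+2K\rho_0+\frac{4K^2\rho_0}{T}\Big).$$ $\zeta^\star_{zf}(R,\Theta)$ is the maximum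 of $\zeta_{zf}(M,K,\tau,R,\Theta)$ over integers $(M,K,\tau)$ with $1\le K\le\tau<T$ and $M>K$. *)

theory Defs
  imports Complex_Main
begin

type_synonym params = "real \<times> real \<times> real \<times> real \<times> real \<times> nat"

definition gamma_u :: "nat \<Rightarrow> nat \<Rightarrow> nat \<Rightarrow> real \<Rightarrow> nat \<Rightarrow> real" where
  "gamma_u M K \<tau> R T =
     (let E = 2 powr (R / (real K * (1 - real \<tau> / real T))) - 1;
          a = (real K + real \<tau>) / (2 * real \<tau> * (real M - real K)) * E
      in a + sqrt (a^2 + E / (real \<tau> * (real M - real K))))"

definition zeta_zf :: "nat \<Rightarrow> nat \<Rightarrow> nat \<Rightarrow> real \<Rightarrow> params \<Rightarrow> real" where
  "zeta_zf M K \<tau> R \<Theta> =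
     (case \<Theta> of (\<alpha>, \<rho>r, \<rho>d, \<rho>s, \<rho>0, T) \<Rightarrow>
        R / (\<alpha> * real K * gamma_u M K \<tau> R T + \<rho>s
             + real K * (\<rho>d + 8 * (real K)^2 * \<rho>0 / (3 * real T))
             + real M * (\<rho>r + 2 * real K * \<rho>0 + 4 * (real K)^2 * \<rho>0 / real T)))"

definition feasible :: "nat \<Rightarrow> (nat \<times> nat \<times> nat) set" where
  "feasible T = {(M, K, \<tau>). 1 \<le> K \<and> K \<le> \<tau> \<and> \<tau> < T \<and> K < M}"

text \<open>zeta-star: the maximum (attained, as supremum) of zeta_zf over feasible triples.\<close>
definition zeta_star :: "real \<Rightarrow> params \<Rightarrow> real" where
  "zeta_star R \<Theta> =
     Sup ((\<lambda>(M, K, \<tau>). zeta_zf M K \<tau> R \<Theta>) ` feasible (snd (snd (snd (snd (snd \<Theta>))))))"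

end

theory Submission
  imports Defs
begin

lemma gamma_nonneg:
  assumes "1 \<le> K" "K \<le> \<tau>" "\<tau> < T" "K < M" "R > 0"
  shows "gamma_u M K \<tau> R T \<ge> 0"
proof -
  have t: "real \<tau> / real T < 1" using assms by simp
  have x: "R / (real K * (1 - real \<tau> / real T)) > 0" using assms t by simp
  have "2 powr (R / (real K * (1 - real \<tau> / real T))) > 1"
    using x by simp
  then have E: "2 powr (R / (real K * (1 - real \<tau> / real T))) - 1 > 0" by simp
  have mk: "real M - real K > 0" using assms by simp
  define E where "E = 2 powr (R / (real K * (1 - real \<tau> / real T))) - 1"
  define a where "a = (real K + real \<tau>) / (2 * real \<tau> * (real M - real K)) * E"
  have a: "a \<ge> 0" unfolding a_def using mk E E_def by simp
  have "E / (real \<tau> * (real M - real K)) \<ge> 0" using mk E E_def by simp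
  then have "a^2 + E / (real \<tau> * (real M - real K)) \<ge> 0" by simp
  then have "sqrt (a^2 + E / (real \<tau> * (real M - real K))) \<ge> 0" by simp
  then show ?thesis unfolding gamma_u_def Let_def E_def[symmetric] a_def[symmetric] using a by simp
qed

theorem theorem1:
  fixes R \<alpha> \<rho>r1 \<rho>d1 \<rho>s1 \<rho>01 \<rho>r2 \<rho>d2 \<rho>s2 \<rho>02 :: real and T :: nat
  assumes "R > 0" and "T > 1" and "\<alpha> > 1"
    and "\<rho>r1 > 0" "\<rho>d1 > 0" "\<rho>s1 > 0" "\<rho>01 > 0"
    and "\<rho>r2 > 0" "\<rho>d2 > 0" "\<rho>s2 > 0" "\<rho>02 > 0"
    and "\<rho>r2 \<ge> \<rho>r1" "\<rho>d2 \<ge> \<rho>d1" "\<rho>s2 \<ge> \<rho>s1" "\<rho>02 \<ge> \<rho>01"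
    and "\<rho>r2 > \<rho>r1 \<or> \<rho>d2 > \<rho>d1 \<or> \<rho>s2 > \<rho>s1 \<or> \<rho>02 > \<rho>01"
  shows "zeta_star R (\<alpha>, \<rho>r1, \<rho>d1, \<rho>s1, \<rho>01, T) > zeta_star R (\<alpha>, \<rho>r2, \<rho>d2, \<rho>s2, \<rho>02, T)"
proof -
  define \<delta> where "\<delta> = (\<rho>s2-\<rho>s1)+(\<rho>d2-\<rho>d1)+(\<rho>r2-\<rho>r1)+(\<rho>02-\<rho>01)"
  have dpos: "\<delta> > 0" unfolding \<delta>_def using assms by linarith
  define D where "D = (\<lambda>rr rd rs r0 (M::nat) (K::nat) (\<tau>::nat).
      \<alpha> * real K * gamma_u M K \<tau> R T + rs
             + real K * (rd + 8 * (real K)^2 * r0 / (3 * real T))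
             + real M * (rr + 2 * real K * r0 + 4 * (real K)^2 * r0 / real T))"
  define Z1 where "Z1 = (\<lambda>(M, K, \<tau>). zeta_zf M K \<tau> R (\<alpha>, \<rho>r1, \<rho>d1, \<rho>s1, \<rho>01, T)) ` feasible T"
  define Z2 where "Z2 = (\<lambda>(M, K, \<tau>). zeta_zf M K \<tau> R (\<alpha>, \<rho>r2, \<rho>d2, \<rho>s2, \<rho>02, T)) ` feasible T"
  have z1: "zeta_star R (\<alpha>, \<rho>r1, \<rho>d1, \<rho>s1, \<rho>01, T) = Sup Z1"
    unfolding zeta_star_def Z1_def by simp
  have z2: "zeta_star R (\<alpha>, \<rho>r2, \<rho>d2, \<rho>s2, \<rho>02, T) = Sup Z2"
    unfolding zeta_star_def Z2_def by simp
  have key: "D \<rho>r1 \<rho>d1 \<rho>s1 \<rho>01 M K \<tau> \<ge> \<rho>s1 \<and>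
     D \<rho>r2 \<rho>d2 \<rho>s2 \<rho>02 M K \<tau> \<ge> D \<rho>r1 \<rho>d1 \<rho>s1 \<rho>01 M K \<tau> + \<delta>"
    if f: "(M, K, \<tau>) \<in> feasible T" for M K \<tau>
  proof -
    from f have h: "1 \<le> K" "K \<le> \<tau>" "\<tau> < T" "K < M" unfolding feasible_def by auto
    have g: "gamma_u M K \<tau> R T \<ge> 0" using gamma_nonneg h assms(1) by blast
    have K1: "real K \<ge> 1" and M1: "real M \<ge> 1" and T0: "real T > 0" using h by auto
    have a1: "\<alpha> * real K * gamma_u M K \<tau> R T \<ge> 0" using g assms(3) K1 by simp
    have p1: "real K * (\<rho>d1 + 8 * (real K)^2 * \<rho>01 / (3 * real T)) \<ge> 0"
      using K1 T0 assms by simp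
    have p2: "real M * (\<rho>r1 + 2 * real K * \<rho>01 + 4 * (real K)^2 * \<rho>01 / real T) \<ge> 0"
      using K1 M1 T0 assms by simp
    have d1: "real K * (\<rho>d2 + 8 * (real K)^2 * \<rho>02 / (3 * real T)) -
       real K * (\<rho>d1 + 8 * (real K)^2 * \<rho>01 / (3 * real T)) \<ge> \<rho>d2 - \<rho>d1"
    proof -
      have "real K * (\<rho>d2 + 8 * (real K)^2 * \<rho>02 / (3 * real T)) -
       real K * (\<rho>d1 + 8 * (real K)^2 * \<rho>01 / (3 * real T)) =
        real K * (\<rho>d2 - \<rho>d1) + real K * (8 * (real K)^2 * (\<rho>02 - \<rho>01) / (3 * real T))"
        by (simp add: algebra_simps diff_divide_distrib)
      moreover have "real K * (\<rho>d2 - \<rho>d1) \<ge> \<rho>d2 - \<rho>d1"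
        using mult_right_mono[OF K1, of "\<rho>d2 - \<rho>d1"] assms(13) by simp
      moreover have "real K * (8 * (real K)^2 * (\<rho>02 - \<rho>01) / (3 * real T)) \<ge> 0"
        using K1 T0 assms(15) by simp
      ultimately show ?thesis by linarith
    qed
    have d2: "real M * (\<rho>r2 + 2 * real K * \<rho>02 + 4 * (real K)^2 * \<rho>02 / real T) -
       real M * (\<rho>r1 + 2 * real K * \<rho>01 + 4 * (real K)^2 * \<rho>01 / real T) \<ge> (\<rho>r2 - \<rho>r1) + (\<rho>02 - \<rho>01)"
    proof -
      have e: "real M * (\<rho>r2 + 2 * real K * \<rho>02 + 4 * (real K)^2 * \<rho>02 / real T) -
       real M * (\<rho>r1 + 2 * real K * \<rho>01 + 4 * (real K)^2 * \<rho>01 / real T) =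
        real M * ((\<rho>r2 - \<rho>r1) + 2 * real K * (\<rho>02 - \<rho>01) + 4 * (real K)^2 * (\<rho>02 - \<rho>01) / real T)"
        by (simp add: algebra_simps diff_divide_distrib)
      have q1: "2 * real K * (\<rho>02 - \<rho>01) \<ge> (\<rho>02 - \<rho>01)"
        using mult_right_mono[of 1 "2 * real K" "\<rho>02 - \<rho>01"] K1 assms(15) by simp
      have q2: "4 * (real K)^2 * (\<rho>02 - \<rho>01) / real T \<ge> 0" using T0 assms(15) by simp
      have "(\<rho>r2 - \<rho>r1) + 2 * real K * (\<rho>02 - \<rho>01) + 4 * (real K)^2 * (\<rho>02 - \<rho>01) / real T
             \<ge> (\<rho>r2 - \<rho>r1) + (\<rho>02 - \<rho>01)" using q1 q2 by linarith
      moreover have "(\<rho>r2 - \<rho>r1) + (\<rho>02 - \<rho>01) \<ge> 0" using assms by linarith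
      ultimately have "real M * ((\<rho>r2 - \<rho>r1) + 2 * real K * (\<rho>02 - \<rho>01) + 4 * (real K)^2 * (\<rho>02 - \<rho>01) / real T) \<ge> (\<rho>r2 - \<rho>r1) + (\<rho>02 - \<rho>01)"
        using M1 mult_right_mono[OF M1] by (smt (verit))
      then show ?thesis using e by simp
    qed
    show ?thesis unfolding D_def \<delta>_def using a1 p1 p2 d1 d2 by simp
  qed
  have Dpos: "D \<rho>r1 \<rho>d1 \<rho>s1 \<rho>01 M K \<tau> > 0" if "(M, K, \<tau>) \<in> feasible T" for M K \<tau>
    using key[OF that] assms(6) by linarith
  have zz1: "zeta_zf M K \<tau> R (\<alpha>, \<rho>r1, \<rho>d1, \<rho>s1, \<rho>01, T) = R / D \<rho>r1 \<rho>d1 \<rho>s1 \<rho>01 M K \<tau>" for M K \<tau>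
    unfolding zeta_zf_def D_def by simp
  have zz2: "zeta_zf M K \<tau> R (\<alpha>, \<rho>r2, \<rho>d2, \<rho>s2, \<rho>02, T) = R / D \<rho>r2 \<rho>d2 \<rho>s2 \<rho>02 M K \<tau>" for M K \<tau>
    unfolding zeta_zf_def D_def by simp
  have fe: "(2, 1, 1) \<in> feasible T" using assms(2) unfolding feasible_def by auto
  have ne1: "Z1 \<noteq> {}" and ne2: "Z2 \<noteq> {}" using fe unfolding Z1_def Z2_def by auto
  have bdd: "bdd_above Z1"
  proof (rule bdd_aboveI[where M = "R / \<rho>s1"])
    fix z assume "z \<in> Z1"
    then obtain M K \<tau> where f: "(M, K, \<tau>) \<in> feasible T" and z: "z = R / D \<rho>r1 \<rho>d1 \<rho>s1 \<rho>01 M K \<tau>"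
      unfolding Z1_def using zz1 by auto
    show "z \<le> R / \<rho>s1" unfolding z using key[OF f] assms(1,6)
      by (intro divide_left_mono) auto
  qed
  define S where "S = Sup Z1"
  have inS: "z \<le> S" if "z \<in> Z1" for z unfolding S_def using cSup_upper[OF that bdd] .
  have Spos: "S > 0"
  proof -
    have "R / D \<rho>r1 \<rho>d1 \<rho>s1 \<rho>01 2 1 1 \<in> Z1" unfolding Z1_def using fe zz1
      by (metis (no_types, lifting) case_prod_conv image_eqI)
    moreover have "R / D \<rho>r1 \<rho>d1 \<rho>s1 \<rho>01 2 1 1 > 0" using Dpos[OF fe] assms(1) by simp
    ultimately show ?thesis using inS by fastforce
  qed
  have bound: "z \<le> R * S / (R + \<delta> * S)" if "z \<in> Z2" for z
  proof -
    from that obtain M K \<tau> where f: "(M, K, \<tau>) \<in> feasible T" and z: "z = R / D \<rho>r2 \<rho>d2 \<rho>s2 \<rho>02 M K \<tau>"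
      unfolding Z2_def using zz2 by auto
    define d1 where "d1 = D \<rho>r1 \<rho>d1 \<rho>s1 \<rho>01 M K \<tau>"
    define d2 where "d2 = D \<rho>r2 \<rho>d2 \<rho>s2 \<rho>02 M K \<tau>"
    have d1p: "d1 > 0" unfolding d1_def using Dpos[OF f] .
    have d12: "d2 \<ge> d1 + \<delta>" unfolding d1_def d2_def using key[OF f] by simp
    have "R / d1 \<in> Z1" unfolding Z1_def d1_def using f zz1
      by (metis (no_types, lifting) case_prod_conv image_eqI)
    then have "R / d1 \<le> S" by (rule inS)
    then have RS: "R \<le> S * d1" using d1p by (simp add: divide_le_eq)
    have "z \<le> R / (d1 + \<delta>)" unfolding z d2_def[symmetric] using d12 d1p dpos assms(1)
      by (intro divide_left_mono) auto
    also have "\<dots> \<le> R * S / (R + \<delta> * S)"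
    proof -
      have "R * (R + \<delta> * S) \<le> R * S * (d1 + \<delta>)"
        using RS assms(1) by (simp add: algebra_simps)
      then show ?thesis using d1p dpos Spos assms(1)
        by (simp add: divide_le_eq le_divide_eq pos_add_strict mult.commute)
    qed
    finally show ?thesis .
  qed
  have "Sup Z2 \<le> R * S / (R + \<delta> * S)" using cSup_least[OF ne2] bound by blast
  also have "\<dots> < S"
  proof -
    have "R * S < S * (R + \<delta> * S)" using Spos dpos by (simp add: algebra_simps)
    then show ?thesis using Spos dpos assms(1) by (simp add: divide_less_eq)
  qed
  finally show ?thesis using z1 z2 S_def by simp
qed

end
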